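(* Let $G=(V,E)$ be a $2$-uniform directed hypergraph with unit edge weights and no loops, containing both undirected edges $\{u,v\}$ (with, say, $T(e)=e$, $H(e)=\emptyset$) and directed edges $(u,v)$ (with $T(e)=\{u\}$, $H(e)=\{v\}$), and such that any unordered pair of distinct nodes is contained in at most one edge. Let $q\in\mathbb R$. Equip $G$ with the directed hypergraph cellular sheaf of stalk dimension $d=1$ and charge $q$ with $\mathcal F_{u\trianglelefteq e}=\mathcal F_{v\trianglelefteq e}=\sqrt2$ for every undirected edge $e=\{u,v\}$ and $\mathcal F_{u\trianglelefteq e}=\mathcal F_{v\trianglelefteq e}=1$ for every directed edge $e=(u,v)$. Then $L^{\vec{\mathcal F}}=L^{(q)}$, the Magnetic Laplacian of $G$. In particular, for $q=\tfrac14$, $L^{\vec{\mathcal F}}$ equals the Sign-Magnetic Laplacian of $G$.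
   Context: A directed hypergraph is $\mathcal H=(V,E)$ with $n=|V|$, $m=|E|$, each hyperedge $e\in E$ a nonempty subset of $V$ partitioned into disjoint sets $T(e)$ (tail) and $H(e)$ (head) with $e=T(e)\cup H(e)$; $\delta_e:=|e|$. A directed hypergraph cellular sheaf with charge $q\in\mathbb R$ and stalk dimension $d$ consists of: for each $e\in E$, $u\in V$, the scalar $\mathcal S^{(q)}_{u\trianglelefteq e}=1$ if $u\in H(e)$, $=e^{-2\pi\mathbf i q}$ if $u\in T(e)$, $=0$ otherwise; for each incidence $u\in e$ a real matrix $\mathcal F_{u\trianglelefteq e}\in\mathbb R^{d\times d}$ and $\vec{\mathcal F}_{u\trianglelefteq e}:=\mathcal S^{(q)}_{u\trianglelefteq e}\mathcal F_{u\trianglelefteq e}$. Let $B^{(q)}\in\mathbb C^{md\times nd}$ have $d\times d$ block $(e,u)$ equal to $\vec{\mathcal F}_{u\trianglelefteq e}$ if $u\in e$ and $0$ otherwise; $D_E=\mathrm{diag}(\delta_1I_d,\dots,\delta_mI_d)$; $D_u:=\sum_{e\ni u}\mathcal F_{u\trianglelefteq e}^\top\mathcal F_{u\trianglelefteq e}$; $D_V=\mathrm{diag}(D_1,\dots,D_n)$; $L^{\vec{\mathcal F}}:=D_V-(B^{(q)})^\dagger D_E^{-1}B^{(q)}$. Magnetic Laplacian: let $A\in\{0,1\}^{n\times n}$ with $A_{uv}=A_{vu}=1$ for each undirected edge $\{u,v\}$, $A_{uv}=1$ for each directed edge $(u,v)$, and $0$ otherwise; $A_s:=\tfrac12(A+A^\top)$;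 $D_s$ diagonal with $(D_s)_{uu}=\sum_v(A_s)_{uv}$; $\Theta^{(q)}:=2\pi q(A-A^\top)$; $H^{(q)}:=A_s\odot\exp(\mathbf i\Theta^{(q)})$ (entrywise product and entrywise exponential); $L^{(q)}:=D_s-H^{(q)}$. For unit-weight graphs of this type the Sign-Magnetic Laplacian coincides with $L^{(1/4)}$. *)

theory Defs
  imports "HOL-Analysis.Analysis"
begin

text \<open>A directed hypergraph on vertex set {0..<n} with m hyperedges indexed by {0..<m};
  hyperedge e has tail T e and head H e (disjoint), e = T e \<union> H e.
  Restriction maps F u e are real d x d matrices given as functions on {0..<d}^2.
  Matrices of size nd x nd are indexed by pairs (vertex, stalk coordinate).\<close>

definition hedge :: "(nat \<Rightarrow> nat set) \<Rightarrow> (nat \<Rightarrow> nat set) \<Rightarrow> nat \<Rightarrow> nat set" where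
  "hedge T H e = T e \<union> H e"

definition charge_S :: "real \<Rightarrow> (nat \<Rightarrow> nat set) \<Rightarrow> (nat \<Rightarrow> nat set) \<Rightarrow> nat \<Rightarrow> nat \<Rightarrow> complex" where
  "charge_S q T H u e =
     (if u \<in> H e then 1 else if u \<in> T e then exp (- 2 * pi * \<i> * of_real q) else 0)"

text \<open>Block (e,u) of B^(q), entry (k,i).\<close>
definition sheaf_B :: "real \<Rightarrow> (nat \<Rightarrow> nat set) \<Rightarrow> (nat \<Rightarrow> nat set)
    \<Rightarrow> (nat \<Rightarrow> nat \<Rightarrow> nat \<Rightarrow> nat \<Rightarrow> real) \<Rightarrow> nat \<times> nat \<Rightarrow> nat \<times> nat \<Rightarrow> complex" where
  "sheaf_B q T H F ek ui =
     (let (e, k) = ek; (u, i) = ui in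
      if u \<in> hedge T H e then charge_S q T H u e * of_real (F u e k i) else 0)"

definition sheaf_DV :: "nat \<Rightarrow> nat \<Rightarrow> (nat \<Rightarrow> nat set) \<Rightarrow> (nat \<Rightarrow> nat set)
    \<Rightarrow> (nat \<Rightarrow> nat \<Rightarrow> nat \<Rightarrow> nat \<Rightarrow> real) \<Rightarrow> nat \<times> nat \<Rightarrow> nat \<times> nat \<Rightarrow> real" where
  "sheaf_DV m d T H F ui vj =
     (let (u, i) = ui; (v, j) = vj in
      if u = v then (\<Sum>e\<in>{e. e < m \<and> u \<in> hedge T H e}. \<Sum>k<d. F u e k i * F u e k j) else 0)"

text \<open>L = D_V - (B^(q))^\<dagger> D_E^{-1} B^(q), with D_E = diag(\<delta>_e I_d).\<close>
definition sheaf_laplacian :: "nat \<Rightarrow> nat \<Rightarrow> real \<Rightarrow> (nat \<Rightarrow> nat set) \<Rightarrow> (nat \<Rightarrow> nat set)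
    \<Rightarrow> (nat \<Rightarrow> nat \<Rightarrow> nat \<Rightarrow> nat \<Rightarrow> real) \<Rightarrow> nat \<times> nat \<Rightarrow> nat \<times> nat \<Rightarrow> complex" where
  "sheaf_laplacian m d q T H F ui vj =
     of_real (sheaf_DV m d T H F ui vj)
     - (\<Sum>e<m. \<Sum>k<d. cnj (sheaf_B q T H F (e, k) ui) * sheaf_B q T H F (e, k) vj
                        / of_nat (card (hedge T H e)))"

datatype gedge = Und nat nat | Dir nat nat

fun gedge_ends :: "gedge \<Rightarrow> nat set" where
  "gedge_ends (Und u v) = {u, v}"
| "gedge_ends (Dir u v) = {u, v}"

fun gedge_tail :: "gedge \<Rightarrow> nat set" where
  "gedge_tail (Und u v) = {u, v}"
| "gedge_tail (Dir u v) = {u}"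

fun gedge_head :: "gedge \<Rightarrow> nat set" where
  "gedge_head (Und u v) = {}"
| "gedge_head (Dir u v) = {v}"

definition adj :: "nat \<Rightarrow> (nat \<Rightarrow> gedge) \<Rightarrow> nat \<Rightarrow> nat \<Rightarrow> real" where
  "adj m es u v =
     (if \<exists>e<m. es e = Und u v \<or> es e = Und v u \<or> es e = Dir u v then 1 else 0)"

definition adj_s :: "nat \<Rightarrow> (nat \<Rightarrow> gedge) \<Rightarrow> nat \<Rightarrow> nat \<Rightarrow> real" where
  "adj_s m es u v = (adj m es u v + adj m es v u) / 2"

definition magnetic_laplacian :: "nat \<Rightarrow> nat \<Rightarrow> (nat \<Rightarrow> gedge) \<Rightarrow> real \<Rightarrow> nat \<Rightarrow> nat \<Rightarrow> complex" where
  "magnetic_laplacian n m es q u v =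
     (if u = v then of_real (\<Sum>w<n. adj_s m es u w) else 0)
     - of_real (adj_s m es u v)
       * exp (\<i> * of_real (2 * pi * q * (adj m es u v - adj m es v u)))"

end

theory Submission imports Defs begin

lemma cnjS: "cnj (exp (- 2 * pi * \<i> * of_real q)) = exp (\<i> * of_real (2*pi*q))"
  by (simp add: exp_cnj mult_ac)
lemma cnjS2: "cnj (exp (- 2 * pi * \<i> * of_real q)) * exp (- 2 * pi * \<i> * of_real q) = 1"
  by (simp add: exp_cnj exp_add[symmetric])

lemma ends_th: "gedge_tail x \<union> gedge_head x = gedge_ends x"
  by (cases x) auto

lemma card2: "card (gedge_ends x) = 2 \<Longrightarrow> \<exists>a b. a \<noteq> b \<and> (x = Und a b \<or> x = Dir a b)"
  by (cases x) (auto split: if_splits)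

definition wt :: "gedge \<Rightarrow> real" where
  "wt x = (case x of Und _ _ \<Rightarrow> 1 | Dir _ _ \<Rightarrow> 1/2)"

lemma adj_e0:
  assumes simple: "\<And>e e'. e < m \<Longrightarrow> e' < m \<Longrightarrow> e \<noteq> e' \<Longrightarrow>
                   gedge_ends (es e) \<noteq> gedge_ends (es e')"
    and e0: "e0 < m" "gedge_ends (es e0) = {u, w}"
  shows "adj m es u w = (if es e0 = Und u w \<or> es e0 = Und w u \<or> es e0 = Dir u w then 1 else 0)"
proof -
  have uniq: "\<And>e. e < m \<Longrightarrow> gedge_ends (es e) = {u, w} \<Longrightarrow> e = e0"
    using simple e0 by metis
  have "(\<exists>e<m. es e = Und u w \<or> es e = Und w u \<or> es e = Dir u w) \<longleftrightarrow>
      (es e0 = Und u w \<or> es e0 = Und w u \<or> es e0 = Dir u w)"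
  proof
    assume "\<exists>e<m. es e = Und u w \<or> es e = Und w u \<or> es e = Dir u w"
    then obtain e where "e<m" "es e = Und u w \<or> es e = Und w u \<or> es e = Dir u w" by blast
    moreover then have "gedge_ends (es e) = {u,w}" by (elim disjE) (simp_all add: insert_commute)
    ultimately show "es e0 = Und u w \<or> es e0 = Und w u \<or> es e0 = Dir u w" using uniq by blast
  qed (use e0 in blast)
  then show ?thesis unfolding adj_def by simp
qed

lemma adj_none:
  assumes "\<not> (\<exists>e0<m. gedge_ends (es e0) = {u, w})"
  shows "adj m es u w = 0"
proof -
  have E: "gedge_ends (es e) = {u,w}" if "es e = Und u w \<or> es e = Und w u \<or> es e = Dir u w" for e
    using that by (elim disjE) (simp_all add: insert_commute)
  have "\<not> (\<exists>e<m. es e = Und u w \<or> es e = Und w u \<or> es e = Dir u w)" using E assms by blast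
  then show ?thesis unfolding adj_def by simp
qed

lemma sum_single:
  fixes e0 m :: nat
  assumes "e0 < m" "\<And>e. e < m \<Longrightarrow> e \<noteq> e0 \<Longrightarrow> f e = 0"
  shows "(\<Sum>e<m. f e) = f e0"
proof -
  have "(\<Sum>e<m. f e) = f e0 + (\<Sum>e\<in>{..<m} - {e0}. f e)"
    using assms(1) by (intro sum.remove) auto
  also have "(\<Sum>e\<in>{..<m} - {e0}. f e) = 0" using assms(2) by (intro sum.neutral) blast
  finally show ?thesis by simp
qed

lemma adj_s_sum:
  assumes no_loops: "\<And>e. e < m \<Longrightarrow> card (gedge_ends (es e)) = 2"
    and simple: "\<And>e e'. e < m \<Longrightarrow> e' < m \<Longrightarrow> e \<noteq> e' \<Longrightarrow>
                   gedge_ends (es e) \<noteq> gedge_ends (es e')"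
  shows "adj_s m es u w = (\<Sum>e<m. if gedge_ends (es e) = {u, w} then wt (es e) else 0)"
proof (cases "\<exists>e0<m. gedge_ends (es e0) = {u, w}")
  case True
  then obtain e0 where e0: "e0 < m" "gedge_ends (es e0) = {u, w}" by blast
  have uniq: "e = e0" if "e < m" "gedge_ends (es e) = {u, w}" for e
    using simple[OF that(1) e0(1)] that(2) e0(2) by blast
  have S0: "(if gedge_ends (es e) = {u, w} then wt (es e) else 0) = 0" if "e < m" "e \<noteq> e0" for e
    using uniq[OF that(1)] that(2) by auto
  have S: "(\<Sum>e<m. if gedge_ends (es e) = {u, w} then wt (es e) else 0) = wt (es e0)"
    using sum_single[OF e0(1) S0] e0(2) by simp
  have A1: "adj m es u w = (if es e0 = Und u w \<or> es e0 = Und w u \<or> es e0 = Dir u w then 1 else 0)"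
    by (rule adj_e0[where m=m and es=es, OF simple e0])
  have A2: "adj m es w u = (if es e0 = Und w u \<or> es e0 = Und u w \<or> es e0 = Dir w u then 1 else 0)"
  proof -
    have e0': "gedge_ends (es e0) = {w, u}" using e0(2) by (metis insert_commute)
    show ?thesis by (rule adj_e0[where m=m and es=es, OF simple e0(1) e0'])
  qed
  obtain a b where ab: "a \<noteq> b" "es e0 = Und a b \<or> es e0 = Dir a b" using card2[OF no_loops[OF e0(1)]] by blast
  have ends_ab: "gedge_ends (es e0) = {a, b}" using ab(2) by auto
  have "(a = u \<and> b = w) \<or> (a = w \<and> b = u)" using ends_ab e0(2) by (metis doubleton_eq_iff)
  then show ?thesis unfolding S adj_s_def A1 A2 using ab
    by (elim disjE conjE) (simp_all add: wt_def)
next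
  case False
  have "adj m es u w = 0" "adj m es w u = 0" using adj_none[of m es u w] adj_none[of m es w u] False by (simp_all add: insert_commute)
  then show ?thesis using False unfolding adj_s_def by (simp add: sum.neutral)
qed


lemma sumw:
  assumes "card (gedge_ends x) = 2" "gedge_ends x \<subseteq> {..<n}"
  shows "(\<Sum>w<n. if gedge_ends x = {u, w} then c else 0) = (if u \<in> gedge_ends x then c else (0::real))"
proof -
  obtain a b where ab: "a \<noteq> b" "gedge_ends x = {a, b}" using assms(1) by (metis card_2_iff)
  show ?thesis
  proof (cases "u = a \<or> u = b")
    case True
    then obtain z where z: "gedge_ends x = {u, z}" "z \<noteq> u" using ab by (metis insert_commute)
    have "z \<in> gedge_ends x" using z(1) by simp
    then have zn: "z < n" using assms(2) by blast
    have eq: "w = z" if "{u, z} = {u, w}" for w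
      using that z(2) by (metis doubleton_eq_iff)
    have "(\<Sum>w<n. if gedge_ends x = {u, w} then c else 0) = (if gedge_ends x = {u, z} then c else 0)"
      by (rule sum_single[OF zn]) (use z(1) eq in metis)
    then show ?thesis using z by simp
  next
    case False
    have "gedge_ends x \<noteq> {u, w}" for w using False ab by auto
    then show ?thesis using False ab by simp
  qed
qed

lemma two_elems:
  assumes "card S = 2" "u \<in> S" "v \<in> S" "u \<noteq> v"
  shows "S = {u, v}"
proof -
  obtain a b where "S = {a, b}" "a \<noteq> b" using assms(1) by (metis card_2_iff)
  then show ?thesis using assms(2-4) by auto
qed

lemma chargeS_abs:
  assumes "u \<in> T e \<union> H e"
  shows "cnj (charge_S q T H u e) * charge_S q T H u e = 1"
  using assms cnjS2[of q] by (auto simp: charge_S_def)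

theorem theorem5:
  fixes n m :: nat and es :: "nat \<Rightarrow> gedge" and q :: real
  assumes edges_in: "\<And>e. e < m \<Longrightarrow> gedge_ends (es e) \<subseteq> {..<n}"
    and no_loops: "\<And>e. e < m \<Longrightarrow> card (gedge_ends (es e)) = 2"
    and simple: "\<And>e e'. e < m \<Longrightarrow> e' < m \<Longrightarrow> e \<noteq> e' \<Longrightarrow>
                   gedge_ends (es e) \<noteq> gedge_ends (es e')"
  shows "\<forall>u<n. \<forall>v<n.
           sheaf_laplacian m 1 q (\<lambda>e. gedge_tail (es e)) (\<lambda>e. gedge_head (es e))
             (\<lambda>w e k i. case es e of Und _ _ \<Rightarrow> sqrt 2 | Dir _ _ \<Rightarrow> 1) (u, 0) (v, 0)
           = magnetic_laplacian n m es q u v"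
proof (intro allI impI)
  fix u v assume un: "u < n" and vn: "v < n"
  define T where "T = (\<lambda>e. gedge_tail (es e))"
  define H where "H = (\<lambda>e. gedge_head (es e))"
  define F where "F = (\<lambda>(w::nat) e (k::nat) (i::nat). case es e of Und _ _ \<Rightarrow> sqrt 2 | Dir _ _ \<Rightarrow> (1::real))"
  define Fe where "Fe = (\<lambda>e. case es e of Und _ _ \<Rightarrow> sqrt 2 | Dir _ _ \<Rightarrow> (1::real))"
  have hedge: "hedge T H e = gedge_ends (es e)" for e
    by (simp add: hedge_def T_def H_def ends_th)
  have FFe: "F w e k i = Fe e" for w e k i by (simp add: F_def Fe_def)
  have wtF: "Fe e * Fe e / 2 = wt (es e)" for e
    by (cases "es e") (simp_all add: Fe_def wt_def)
  have Bs: "sheaf_B q T H F (e, 0) (w, 0) = (if w \<in> gedge_ends (es e) then charge_S q T H w e * of_real (Fe e) else 0)" for e w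
    by (simp add: sheaf_B_def hedge FFe)
  have L: "sheaf_laplacian m 1 q T H F (u, 0) (v, 0) =
     of_real (sheaf_DV m 1 T H F (u, 0) (v, 0))
     - (\<Sum>e<m. cnj (sheaf_B q T H F (e, 0) (u, 0)) * sheaf_B q T H F (e, 0) (v, 0) / 2)"
    unfolding sheaf_laplacian_def
    by (intro arg_cong2[where f="(-)"] refl sum.cong) (simp_all add: hedge no_loops)
  have THe: "w \<in> T e \<union> H e \<longleftrightarrow> w \<in> gedge_ends (es e)" for w e
    using hedge[of e] by (simp add: hedge_def)
  have DV: "sheaf_DV m 1 T H F (u, 0) (v, 0) =
      (if u = v then (\<Sum>e<m. if u \<in> gedge_ends (es e) then Fe e * Fe e else 0) else 0)"
  proof -
    have gen: "(\<Sum>e\<in>{e. e < m \<and> x \<in> hedge T H e}. Fe e * Fe e) =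
        (\<Sum>e<m. if x \<in> gedge_ends (es e) then Fe e * Fe e else 0)" for x
    proof -
      have set: "{e. e < m \<and> x \<in> hedge T H e} = {e \<in> {..<m}. x \<in> gedge_ends (es e)}"
        by (auto simp: hedge)
      show ?thesis by (simp only: set sum.inter_filter[OF finite_lessThan])
    qed
    show ?thesis by (simp add: sheaf_DV_def FFe gen)
  qed
  have trm: "cnj (sheaf_B q T H F (e, 0) (u, 0)) * sheaf_B q T H F (e, 0) (v, 0) / 2 =
      (if u \<in> gedge_ends (es e) \<and> v \<in> gedge_ends (es e)
       then cnj (charge_S q T H u e) * charge_S q T H v e * of_real (Fe e * Fe e / 2) else 0)" for e
    by (simp add: Bs)
  show "sheaf_laplacian m 1 q T H F (u, 0) (v, 0) = magnetic_laplacian n m es q u v"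
  proof (cases "u = v")
    case True
    have t: "cnj (sheaf_B q T H F (e, 0) (u, 0)) * sheaf_B q T H F (e, 0) (v, 0) / 2 =
       of_real (if u \<in> gedge_ends (es e) then wt (es e) else 0)" for e
      using trm[of e] chargeS_abs[of u T e H q] True THe[of u e] wtF[of e] by auto
    have L1: "sheaf_laplacian m 1 q T H F (u, 0) (v, 0) =
        of_real (\<Sum>e<m. if u \<in> gedge_ends (es e) then wt (es e) else 0)"
    proof -
      have "(\<Sum>e<m. if u \<in> gedge_ends (es e) then Fe e * Fe e else 0)
          - (\<Sum>e<m. if u \<in> gedge_ends (es e) then wt (es e) else 0)
          = (\<Sum>e<m. if u \<in> gedge_ends (es e) then wt (es e) else 0)"
        by (auto simp: sum_subtractf[symmetric] wtF[symmetric] intro!: sum.cong)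
      then show ?thesis unfolding L DV t using True by (simp flip: of_real_sum)
    qed
    have auu: "adj_s m es u u = 0"
    proof -
      have "gedge_ends (es e) \<noteq> {u, u}" if "e < m" for e using no_loops[OF that] by auto
      then show ?thesis by (simp add: adj_s_sum[OF no_loops simple])
    qed
    have "(\<Sum>w<n. adj_s m es u w) = (\<Sum>w<n. \<Sum>e<m. if gedge_ends (es e) = {u, w} then wt (es e) else 0)"
      by (simp add: adj_s_sum[OF no_loops simple])
    also have "\<dots> = (\<Sum>e<m. \<Sum>w<n. if gedge_ends (es e) = {u, w} then wt (es e) else 0)"
      by (rule sum.swap)
    also have "\<dots> = (\<Sum>e<m. if u \<in> gedge_ends (es e) then wt (es e) else 0)"
      by (intro sum.cong refl sumw no_loops edges_in) simp_all
    finally have "(\<Sum>w<n. adj_s m es u w) = (\<Sum>e<m. if u \<in> gedge_ends (es e) then wt (es e) else 0)" .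
    then show ?thesis using True L1 auu by (simp add: magnetic_laplacian_def)
  next
    case False
    have both: "gedge_ends (es e) = {u, v}" if "e < m" "u \<in> gedge_ends (es e)" "v \<in> gedge_ends (es e)" for e
      using two_elems[OF no_loops[OF that(1)] that(2,3) False] .
    have L2: "sheaf_laplacian m 1 q T H F (u, 0) (v, 0) =
       - (\<Sum>e<m. cnj (sheaf_B q T H F (e, 0) (u, 0)) * sheaf_B q T H F (e, 0) (v, 0) / 2)"
      unfolding L DV using False by simp
    show ?thesis
    proof (cases "\<exists>e0<m. gedge_ends (es e0) = {u, v}")
      case True
      then obtain e0 where e0: "e0 < m" "gedge_ends (es e0) = {u, v}" by blast
      have uniq: "e = e0" if "e < m" "gedge_ends (es e) = {u, v}" for e
        using simple[OF that(1) e0(1)] that(2) e0(2) by blast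
      have z: "cnj (sheaf_B q T H F (e, 0) (u, 0)) * sheaf_B q T H F (e, 0) (v, 0) / 2 = 0"
        if "e < m" "e \<noteq> e0" for e
        using trm[of e] both[OF that(1)] uniq[OF that(1)] that(2) by auto
      have S: "sheaf_laplacian m 1 q T H F (u, 0) (v, 0) =
          - (cnj (charge_S q T H u e0) * charge_S q T H v e0 * of_real (Fe e0 * Fe e0 / 2))"
      proof -
        have "(\<Sum>e<m. cnj (sheaf_B q T H F (e, 0) (u, 0)) * sheaf_B q T H F (e, 0) (v, 0) / 2)
            = cnj (sheaf_B q T H F (e0, 0) (u, 0)) * sheaf_B q T H F (e0, 0) (v, 0) / 2"
          by (rule sum_single[OF e0(1) z])
        then show ?thesis unfolding L2 trm[of e0] using e0(2) by simp
      qed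
      have e0': "gedge_ends (es e0) = {v, u}" using e0(2) by (metis insert_commute)
      have A1: "adj m es u v = (if es e0 = Und u v \<or> es e0 = Und v u \<or> es e0 = Dir u v then 1 else 0)"
        by (rule adj_e0[where m=m and es=es, OF simple e0])
      have A2: "adj m es v u = (if es e0 = Und v u \<or> es e0 = Und u v \<or> es e0 = Dir v u then 1 else 0)"
        by (rule adj_e0[where m=m and es=es, OF simple e0(1) e0'])
      obtain a b where ab: "a \<noteq> b" "es e0 = Und a b \<or> es e0 = Dir a b"
        using card2[OF no_loops[OF e0(1)]] by blast
      have ends_ab: "gedge_ends (es e0) = {a, b}" using ab(2) by auto
      have "(a = u \<and> b = v) \<or> (a = v \<and> b = u)" using ends_ab e0(2) by (metis doubleton_eq_iff)
      then show ?thesis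
        unfolding S magnetic_laplacian_def adj_s_def A1 A2 using ab(2) False
        by (elim disjE conjE)
          (simp_all add: charge_S_def T_def H_def Fe_def exp_cnj exp_add[symmetric] exp_minus[symmetric] mult_ac)
    next
      case none: False
      have z: "cnj (sheaf_B q T H F (e, 0) (u, 0)) * sheaf_B q T H F (e, 0) (v, 0) / 2 = 0"
        if "e < m" for e
        using trm[of e] both[OF that(1)] none that by auto
      have "adj m es u v = 0" "adj m es v u = 0"
        using adj_none[of m es u v] adj_none[of m es v u] none by (simp_all add: insert_commute)
      moreover have "(\<Sum>e<m. cnj (sheaf_B q T H F (e, 0) (u, 0)) * sheaf_B q T H F (e, 0) (v, 0) / 2) = 0"
        by (rule sum.neutral) (use z in blast)
      ultimately show ?thesis unfolding L2 using False by (simp add: magnetic_laplacian_def adj_s_def)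
    qed
  qed
qed

end
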